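(* Let $L\ge1$ be an integer and $\theta>0$. Let $\Omega=\{0,1\}^I$ for a countable index set $I$, equipped with a product probability measure, and partially ordered coordinatewise. For $t=0,1,\dots,L$ let $S_t:\Omega\to(0,\infty]$ be nonincreasing functions (the SIR of a typical link at time $t$, as a function of the configuration $\omega$ of active interferers), such that $P(S_t>\theta)=1-P_b$ for all $t$, with $P_b\in[0,1)$. Define $$P_{\text{fail}}=1-\frac{P(S_0>\theta,S_1>\theta,\dots,S_L>\theta)}{P(S_0>\theta)},\qquad P_{out}=P_b+(1-P_b)P_{\text{fail}}.$$ Then $P_{out}\le 1-(1-P_b)^{L+1}$.
   Context: CSMA model with energy-harvesting transmitters: a packet occupies $L$ slots; the typical transmitter backs off (with probability $P_b$) if its SIR at time $0$ is at most $\theta$, and otherwise transmits, the transmission failing if the SIR drops to at most $\theta$ at some time $1,\dots,L$. The configuration $\omega$ records which interferers are active at each time, with independent activity indicators (the paper's independence approximation), and since adding active interferers cannot increase the SIR, each $S_t$ is nonincreasing in $\omega$; all SIRs are identically distributed. $P_{out}$ is the outage probability. *)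

theory Defs
  imports "HOL-Probability.Probability"
begin

definition bern_prod :: "('i \<Rightarrow> real) \<Rightarrow> ('i \<Rightarrow> bool) measure" where
  "bern_prod p = PiM UNIV (\<lambda>i. measure_pmf (bernoulli_pmf (p i)))"

definition P_fail :: "('i \<Rightarrow> bool) measure \<Rightarrow> (nat \<Rightarrow> ('i \<Rightarrow> bool) \<Rightarrow> ereal) \<Rightarrow> real \<Rightarrow> nat \<Rightarrow> real" where
  "P_fail M S \<theta> L =
     1 - measure M {\<omega> \<in> space M. \<forall>t\<le>L. S t \<omega> > ereal \<theta>}
         / measure M {\<omega> \<in> space M. S 0 \<omega> > ereal \<theta>}"

definition P_out :: "real \<Rightarrow> ('i \<Rightarrow> bool) measure \<Rightarrow> (nat \<Rightarrow> ('i \<Rightarrow> bool) \<Rightarrow> ereal) \<Rightarrow> real \<Rightarrow> nat \<Rightarrow> real" where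
  "P_out Pb M S \<theta> L = Pb + (1 - Pb) * P_fail M S \<theta> L"

end

theory Submission
  imports Defs
begin

definition mg :: "'i set \<Rightarrow> ('i \<Rightarrow> bool) \<Rightarrow> ('i \<Rightarrow> bool) \<Rightarrow> ('i \<Rightarrow> bool)" where
  "mg J x y = (\<lambda>i. if i \<in> J then x i else y i)"

lemma space_bp[simp]: "space (bern_prod p) = UNIV"
  by (auto simp: bern_prod_def space_PiM PiE_def extensional_def)

lemma prob_bp: "prob_space (bern_prod p)"
  unfolding bern_prod_def by (intro prob_space_PiM measure_pmf.prob_space_axioms)

lemma meas_mg: "(\<lambda>z. mg J (fst z) (snd z)) \<in> measurable (bern_prod p \<Otimes>\<^sub>M bern_prod p) (bern_prod p)"
  unfolding bern_prod_def mg_def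
  by (rule measurable_PiM_single') (auto)

lemma cyl: "prod_emb UNIV (\<lambda>i. measure_pmf (bernoulli_pmf (p i))) K (PiE K A) = {x. \<forall>k\<in>K. x k \<in> A k}"
  by (auto simp: prod_emb_def space_PiM PiE_def extensional_def Pi_iff)

lemma emeasure_cyl: "finite K \<Longrightarrow> emeasure (bern_prod p) {x. \<forall>k\<in>K. x k \<in> A k}
   = (\<Prod>k\<in>K. emeasure (measure_pmf (bernoulli_pmf (p k))) (A k))"
  using emeasure_PiM_emb[of UNIV "\<lambda>i. measure_pmf (bernoulli_pmf (p i))" K A]
  by (simp add: cyl bern_prod_def measure_pmf.prob_space_axioms)

lemma meas_cyl: "finite K \<Longrightarrow> {x. \<forall>k\<in>K. x k \<in> A k} \<in> sets (bern_prod p)"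
proof -
  assume K: "finite K"
  have "Measurable.pred (bern_prod p) (\<lambda>x. \<forall>k\<in>K. x k \<in> A k)"
    using K unfolding bern_prod_def by measurable
  then show ?thesis by (simp add: pred_def)
qed

lemma distr_mg: "distr (bern_prod p \<Otimes>\<^sub>M bern_prod p) (bern_prod p) (\<lambda>z. mg J (fst z) (snd z)) = bern_prod p"
proof -
  interpret P: prob_space "bern_prod p" by (rule prob_bp)
  interpret PP: pair_prob_space "bern_prod p" "bern_prod p" ..
  have eq: "emeasure (distr (bern_prod p \<Otimes>\<^sub>M bern_prod p) (bern_prod p) (\<lambda>z. mg J (fst z) (snd z))) {x. \<forall>k\<in>K. x k \<in> A k}
        = emeasure (bern_prod p) {x. \<forall>k\<in>K. x k \<in> A k}" if K: "finite K" for K and A :: "'a \<Rightarrow> bool set"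
  proof -
    have pre: "(\<lambda>z. mg J (fst z) (snd z)) -` {x. \<forall>k\<in>K. x k \<in> A k} \<inter> space (bern_prod p \<Otimes>\<^sub>M bern_prod p)
       = {x. \<forall>k\<in>K\<inter>J. x k \<in> A k} \<times> {x. \<forall>k\<in>K-J. x k \<in> A k}"
      by (auto simp: mg_def space_pair_measure)
    have "emeasure (distr (bern_prod p \<Otimes>\<^sub>M bern_prod p) (bern_prod p) (\<lambda>z. mg J (fst z) (snd z))) {x. \<forall>k\<in>K. x k \<in> A k}
        = emeasure (bern_prod p \<Otimes>\<^sub>M bern_prod p) ({x. \<forall>k\<in>K\<inter>J. x k \<in> A k} \<times> {x. \<forall>k\<in>K-J. x k \<in> A k})"
      apply (subst emeasure_distr[OF meas_mg])
        apply (simp add: meas_cyl K)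
       apply (simp only: pre)
      done
    also have "\<dots> = emeasure (bern_prod p) {x. \<forall>k\<in>K\<inter>J. x k \<in> A k} * emeasure (bern_prod p) {x. \<forall>k\<in>K-J. x k \<in> A k}"
      by (rule P.emeasure_pair_measure_Times) (auto intro: meas_cyl K)
    also have "\<dots> = emeasure (bern_prod p) {x. \<forall>k\<in>K. x k \<in> A k}"
      using K by (simp add: emeasure_cyl prod.Int_Diff[of K _ J])
    finally show ?thesis .
  qed
  have fm: "finite_measure (distr (bern_prod p \<Otimes>\<^sub>M bern_prod p) (bern_prod p) (\<lambda>z. mg J (fst z) (snd z)))"
      using prob_space.prob_space_distr[OF PP.P.prob_space_axioms meas_mg] prob_space.axioms(1) by blast
  show ?thesis
    unfolding bern_prod_def
    apply (rule measure_eqI_PiM_infinite)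
       apply simp
      apply simp
     apply (unfold cyl)
     apply (rule eq[unfolded bern_prod_def])
     apply assumption
    apply (rule fm[unfolded bern_prod_def])
    done
qed


lemma meas_upd: "(\<lambda>x. x(i:=b)) \<in> measurable (bern_prod p) (bern_prod p)"
  unfolding bern_prod_def
  by (rule measurable_PiM_single') (auto)

lemma integrable_bp: "h \<in> borel_measurable (bern_prod p) \<Longrightarrow> (\<And>x. \<bar>h x\<bar> \<le> B) \<Longrightarrow> integrable (bern_prod p) h"
  for h :: "_ \<Rightarrow> real"
  by (rule finite_measure.integrable_const_bound[where B=B])
     (auto intro: prob_space.finite_measure prob_bp)

lemma int_mg:
  fixes h :: "_ \<Rightarrow> real"
  assumes hm: "h \<in> borel_measurable (bern_prod p)" and hb: "\<And>x. \<bar>h x\<bar> \<le> B"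
  shows "(\<integral>x. (\<integral>y. h (mg J x y) \<partial>bern_prod p) \<partial>bern_prod p) = (\<integral>x. h x \<partial>bern_prod p)"
proof -
  interpret P: prob_space "bern_prod p" by (rule prob_bp)
  interpret PP: pair_prob_space "bern_prod p" "bern_prod p" ..
  have "(\<integral>x. h x \<partial>bern_prod p) = (\<integral>x. h x \<partial>distr (bern_prod p \<Otimes>\<^sub>M bern_prod p) (bern_prod p) (\<lambda>z. mg J (fst z) (snd z)))"
    by (simp add: distr_mg)
  also have "\<dots> = (\<integral>z. h (mg J (fst z) (snd z)) \<partial>(bern_prod p \<Otimes>\<^sub>M bern_prod p))"
    by (rule integral_distr[OF meas_mg hm])
  also have "\<dots> = (\<integral>x. (\<integral>y. h (mg J (fst (x,y)) (snd (x,y))) \<partial>bern_prod p) \<partial>bern_prod p)"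
  proof (rule PP.integral_fst'[symmetric])
    show "integrable (bern_prod p \<Otimes>\<^sub>M bern_prod p) (\<lambda>z. h (mg J (fst z) (snd z)))"
      by (rule PP.P.integrable_const_bound[where B=B]) (auto intro: hb measurable_compose[OF meas_mg hm])
  qed
  finally show ?thesis by simp
qed

lemma split_i:
  fixes h :: "_ \<Rightarrow> real"
  assumes hm: "h \<in> borel_measurable (bern_prod p)" and hb: "\<And>x. \<bar>h x\<bar> \<le> B"
    and pi: "0 \<le> p i" "p i \<le> 1"
  shows "(\<integral>x. h x \<partial>bern_prod p) = p i * (\<integral>x. h (x(i:=True)) \<partial>bern_prod p) + (1 - p i) * (\<integral>x. h (x(i:=False)) \<partial>bern_prod p)"
proof -
  interpret P: prob_space "bern_prod p" by (rule prob_bp)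
  let ?B = "measure_pmf (bernoulli_pmf (p i))"
  interpret PP: pair_prob_space ?B "bern_prod p" by unfold_locales
  have d: "distr (?B \<Otimes>\<^sub>M bern_prod p) (bern_prod p) (\<lambda>(x, X). X(i := x)) = bern_prod p"
    using distr_pair_PiM_eq_PiM[of UNIV "\<lambda>i. measure_pmf (bernoulli_pmf (p i))" i]
    by (simp add: bern_prod_def measure_pmf.prob_space_axioms)
  have m: "(\<lambda>(x, X). X(i := x)) \<in> measurable (?B \<Otimes>\<^sub>M bern_prod p) (bern_prod p)"
    unfolding bern_prod_def by (rule measurable_PiM_single') (auto simp: split_beta)
  have "(\<integral>x. h x \<partial>bern_prod p) = (\<integral>x. h x \<partial>distr (?B \<Otimes>\<^sub>M bern_prod p) (bern_prod p) (\<lambda>(x, X). X(i := x)))"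
    by (simp add: d)
  also have "\<dots> = (\<integral>z. h ((\<lambda>(x, X). X(i := x)) z) \<partial>(?B \<Otimes>\<^sub>M bern_prod p))"
    by (rule integral_distr[OF m hm])
  also have "\<dots> = (\<integral>b. (\<integral>X. h ((\<lambda>(x, X). X(i := x)) (b,X)) \<partial>bern_prod p) \<partial>?B)"
  proof (rule PP.integral_fst'[symmetric])
    show "integrable (?B \<Otimes>\<^sub>M bern_prod p) (\<lambda>z. h ((\<lambda>(x, X). X(i := x)) z))"
      by (rule PP.P.integrable_const_bound[where B=B]) (auto intro: hb measurable_compose[OF m hm])
  qed
  also have "\<dots> = (\<Sum>b\<in>UNIV. (\<integral>X. h (X(i := b)) \<partial>bern_prod p) * pmf (bernoulli_pmf (p i)) b)"
    by (subst integral_measure_pmf_real[where A=UNIV]) auto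
  also have "\<dots> = p i * (\<integral>x. h (x(i:=True)) \<partial>bern_prod p) + (1 - p i) * (\<integral>x. h (x(i:=False)) \<partial>bern_prod p)"
    using pi by (simp add: UNIV_bool)
  finally show ?thesis .
qed


definition fdep :: "'i set \<Rightarrow> (('i \<Rightarrow> bool) \<Rightarrow> real) \<Rightarrow> bool" where
  "fdep J f = (\<forall>x y. f (mg J x y) = f x)"

definition goodf :: "('i \<Rightarrow> real) \<Rightarrow> (('i \<Rightarrow> bool) \<Rightarrow> real) \<Rightarrow> bool" where
  "goodf p f = (f \<in> borel_measurable (bern_prod p) \<and> (\<forall>x. 0 \<le> f x \<and> f x \<le> 1) \<and> antimono f)"

lemma mg_upd: "(mg J x y)(i:=b) = mg (insert i J) (x(i:=b)) y"
  by (rule ext) (simp add: mg_def)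

lemma goodf_upd: "goodf p f \<Longrightarrow> goodf p (\<lambda>x. f (x(i:=b)))"
  unfolding goodf_def
proof (intro conjI)
  assume a: "f \<in> borel_measurable (bern_prod p) \<and> (\<forall>x. 0 \<le> f x \<and> f x \<le> 1) \<and> antimono f"
  show "(\<lambda>x. f (x(i := b))) \<in> borel_measurable (bern_prod p)"
    using a by (intro measurable_compose[OF meas_upd]) auto
  show "\<forall>x. 0 \<le> f (x(i := b)) \<and> f (x(i := b)) \<le> 1" using a by auto
  show "antimono (\<lambda>x. f (x(i := b)))"
  proof (rule antimonoI)
    fix x y :: "'a \<Rightarrow> bool" assume "x \<le> y"
    then have "x(i:=b) \<le> y(i:=b)" by (auto simp: le_fun_def)
    then show "f (y(i := b)) \<le> f (x(i := b))" using a by (auto dest: antimonoD)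
  qed
qed

lemma goodf_int: "goodf p f \<Longrightarrow> integrable (bern_prod p) f"
  unfolding goodf_def by (intro integrable_bp[where B=1]) auto

lemma goodf_int_mult: "goodf p f \<Longrightarrow> goodf p g \<Longrightarrow> integrable (bern_prod p) (\<lambda>x. f x * g x)"
  unfolding goodf_def by (intro integrable_bp[where B=1]) (auto simp: abs_mult intro: mult_le_one)

lemma harris_fin:
  assumes J: "finite J" and p: "\<forall>i. 0 \<le> p i \<and> p i \<le> 1"
  shows "\<forall>f g. goodf p f \<and> goodf p g \<and> fdep J f \<and> fdep J g \<longrightarrow>
     (\<integral>x. f x \<partial>bern_prod p) * (\<integral>x. g x \<partial>bern_prod p) \<le> (\<integral>x. f x * g x \<partial>bern_prod p)"
  using J
proof (induction J rule: finite_induct)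
  case empty
  interpret P: prob_space "bern_prod p" by (rule prob_bp)
  show ?case
  proof (intro allI impI)
    fix f g :: "('a \<Rightarrow> bool) \<Rightarrow> real"
    assume a: "goodf p f \<and> goodf p g \<and> fdep {} f \<and> fdep {} g"
    define u where "u = f undefined"
    have c: "f x = u" for x
    proof -
      have "f (mg {} undefined x) = f undefined" using a unfolding fdep_def by blast
      moreover have "mg {} undefined x = x" by (simp add: mg_def)
      ultimately show ?thesis by (simp add: u_def)
    qed
    show "(\<integral>x. f x \<partial>bern_prod p) * (\<integral>x. g x \<partial>bern_prod p) \<le> (\<integral>x. f x * g x \<partial>bern_prod p)"
      using P.prob_space by (simp add: c)
  qed
next
  case (insert i J)
  show ?case
  proof (intro allI impI)
    fix f g :: "('a \<Rightarrow> bool) \<Rightarrow> real"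
    assume a: "goodf p f \<and> goodf p g \<and> fdep (insert i J) f \<and> fdep (insert i J) g"
    let ?q = "p i"
    have q: "0 \<le> ?q" "?q \<le> 1" using p by auto
    have dep: "fdep J (\<lambda>x. h (x(i:=b)))" if "fdep (insert i J) h" for h and b
      using that unfolding fdep_def by (simp add: mg_upd)
    have gd: "goodf p (\<lambda>x. h (x(i:=b)))" if "goodf p h" for h b
      using that by (rule goodf_upd)
    define aT where "aT = (\<integral>x. f (x(i:=True)) \<partial>bern_prod p)"
    define aF where "aF = (\<integral>x. f (x(i:=False)) \<partial>bern_prod p)"
    define bT where "bT = (\<integral>x. g (x(i:=True)) \<partial>bern_prod p)"
    define bF where "bF = (\<integral>x. g (x(i:=False)) \<partial>bern_prod p)"
    define cT where "cT = (\<integral>x. f (x(i:=True)) * g (x(i:=True)) \<partial>bern_prod p)"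
    define cF where "cF = (\<integral>x. f (x(i:=False)) * g (x(i:=False)) \<partial>bern_prod p)"
    have IT: "aT * bT \<le> cT" unfolding aT_def bT_def cT_def
      using insert.IH[rule_format, of "\<lambda>x. f (x(i:=True))" "\<lambda>x. g (x(i:=True))"]
        a dep[of f True] dep[of g True] gd[of f True] gd[of g True] by simp
    have IF: "aF * bF \<le> cF" unfolding aF_def bF_def cF_def
      using insert.IH[rule_format, of "\<lambda>x. f (x(i:=False))" "\<lambda>x. g (x(i:=False))"]
        a dep[of f False] dep[of g False] gd[of f False] gd[of g False] by simp
    have le: "h (x(i:=True)) \<le> h (x(i:=False))" if "goodf p h" for h x
    proof -
      have "x(i:=False) \<le> x(i:=True)" by (auto simp: le_fun_def)
      then show ?thesis using that unfolding goodf_def by (auto dest: antimonoD)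
    qed
    have fa: "aT \<le> aF" unfolding aT_def aF_def
      using goodf_int[OF gd[of f True]] goodf_int[OF gd[of f False]] le[of f] a
      by (intro integral_mono) auto
    have gb: "bT \<le> bF" unfolding bT_def bF_def
      using goodf_int[OF gd[of g True]] goodf_int[OF gd[of g False]] le[of g] a
      by (intro integral_mono) auto
    have ef: "(\<integral>x. f x \<partial>bern_prod p) = ?q * aT + (1 - ?q) * aF"
      unfolding aT_def aF_def using a q unfolding goodf_def
      by (intro split_i[where B=1]) auto
    have eg: "(\<integral>x. g x \<partial>bern_prod p) = ?q * bT + (1 - ?q) * bF"
      unfolding bT_def bF_def using a q unfolding goodf_def
      by (intro split_i[where B=1]) auto
    have efg: "(\<integral>x. f x * g x \<partial>bern_prod p) = ?q * cT + (1 - ?q) * cF"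
      unfolding cT_def cF_def using a q unfolding goodf_def
      by (intro split_i[where B=1]) (auto simp: abs_mult intro: mult_le_one)
    have "(?q * aT + (1 - ?q) * aF) * (?q * bT + (1 - ?q) * bF)
        = ?q * aT * bT + (1 - ?q) * aF * bF - ?q * (1 - ?q) * ((aF - aT) * (bF - bT))"
      by (simp add: algebra_simps)
    also have "\<dots> \<le> ?q * aT * bT + (1 - ?q) * aF * bF"
      using q fa gb by (simp add: mult_nonneg_nonneg)
    also have "\<dots> \<le> ?q * cT + (1 - ?q) * cF"
      using IT IF q by (metis add_mono mult.assoc mult_left_mono diff_ge_0_iff_ge)
    finally show "(\<integral>x. f x \<partial>bern_prod p) * (\<integral>x. g x \<partial>bern_prod p) \<le> (\<integral>x. f x * g x \<partial>bern_prod p)"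
      using ef eg efg by simp
  qed
qed

definition sdep :: "'i set \<Rightarrow> ('i \<Rightarrow> bool) set \<Rightarrow> bool" where
  "sdep J C = (\<forall>x y. (mg J x y \<in> C) = (x \<in> C))"

lemma mg_mg: "J \<subseteq> K \<Longrightarrow> mg J (mg K x y) x = x"
  by (rule ext) (auto simp: mg_def)

lemma sdep_mono: "J \<subseteq> K \<Longrightarrow> sdep J C \<Longrightarrow> sdep K C"
  unfolding sdep_def by (metis mg_mg)

definition approx_set :: "('i \<Rightarrow> real) \<Rightarrow> ('i \<Rightarrow> bool) set \<Rightarrow> bool" where
  "approx_set p A = (\<forall>e>0. \<exists>J C. finite J \<and> C \<in> sets (bern_prod p) \<and> sdep J C \<and>
      measure (bern_prod p) ((A - C) \<union> (C - A)) < e)"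

lemma approx_all:
  assumes A: "A \<in> sets (bern_prod p)"
  shows "approx_set p A"
proof -
  interpret P: prob_space "bern_prod p" by (rule prob_bp)
  let ?M = "\<lambda>i. measure_pmf (bernoulli_pmf (p i))"
  have ss: "sigma_sets (\<Pi>\<^sub>E i\<in>UNIV. space (?M i)) (prod_algebra UNIV ?M) = sets (bern_prod p)"
    by (simp add: bern_prod_def sets_PiM)
  have Om: "(\<Pi>\<^sub>E i\<in>UNIV. space (?M i)) = UNIV"
    by (auto simp: PiE_def extensional_def)
  have A': "A \<in> sigma_sets (\<Pi>\<^sub>E i\<in>UNIV. space (?M i)) (prod_algebra UNIV ?M)" unfolding ss by (rule A)
  show ?thesis
    using Int_stable_prod_algebra prod_algebra_sets_into_space A'
  proof (induction rule: sigma_sets_induct_disjoint)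
    case (basic A)
    then obtain K E where AK: "A = prod_emb UNIV ?M K (\<Pi>\<^sub>E j\<in>K. E j)" and K: "finite K"
      by (auto elim!: prod_algebraE)
    then have A2: "A = {x. \<forall>k\<in>K. x k \<in> E k}" by (simp add: cyl)
    have "A \<in> sets (bern_prod p)" using A2 K by (simp add: meas_cyl)
    moreover have "sdep K A" unfolding sdep_def A2 by (simp add: mg_def)
    ultimately show ?case unfolding approx_set_def using K by (intro allI impI exI[of _ K] exI[of _ A]) auto
  next
    case empty
    show ?case unfolding approx_set_def
      by (intro allI impI exI[of _ "{}"] exI[of _ "{}"]) (auto simp: sdep_def)
  next
    case (compl A)
    show ?case unfolding approx_set_def
    proof (intro allI impI)
      fix e :: real assume e: "e > 0"
      then obtain J C where JC: "finite J" "C \<in> sets (bern_prod p)" "sdep J C"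
        "measure (bern_prod p) ((A - C) \<union> (C - A)) < e"
        using compl.IH unfolding approx_set_def by blast
      have "((UNIV - A) - (UNIV - C)) \<union> ((UNIV - C) - (UNIV - A)) = (A - C) \<union> (C - A)" by blast
      moreover have "UNIV - C \<in> sets (bern_prod p)" using sets.compl_sets[OF JC(2)] by simp
      moreover have "sdep J (UNIV - C)" using JC(3) unfolding sdep_def by blast
      ultimately show "\<exists>J C. finite J \<and> C \<in> sets (bern_prod p) \<and> sdep J C \<and>
          measure (bern_prod p) (((\<Pi>\<^sub>E i\<in>UNIV. space (?M i)) - A - C) \<union> (C - ((\<Pi>\<^sub>E i\<in>UNIV. space (?M i)) - A))) < e"
        using JC unfolding Om by (intro exI[of _ J] exI[of _ "UNIV - C"]) auto
    qed
  next
    case (union A)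
    have As: "A n \<in> sets (bern_prod p)" for n using union.hyps(2)[unfolded ss] by auto
    show ?case unfolding approx_set_def
    proof (intro allI impI)
      fix e :: real assume e: "e > 0"
      define U where "U = (\<Union>n. A n)"
      define B where "B N = (\<Union>n<N. A n)" for N
      have Bs: "B N \<in> sets (bern_prod p)" for N unfolding B_def using As by auto
      have Us: "U \<in> sets (bern_prod p)" unfolding U_def using As by auto
      have "incseq B" unfolding B_def incseq_def by (auto intro: order_less_le_trans)
      moreover have "(\<Union>N. B N) = U" unfolding B_def U_def by auto
      ultimately have lim: "(\<lambda>N. measure (bern_prod p) (B N)) \<longlonglongrightarrow> measure (bern_prod p) U"
        using P.finite_Lim_measure_incseq[of B] Bs by auto
      have "\<forall>\<^sub>F N in sequentially. measure (bern_prod p) U - e/2 < measure (bern_prod p) (B N)"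
        using order_tendstoD(1)[OF lim, of "measure (bern_prod p) U - e/2"] e by simp
      then obtain N where N: "measure (bern_prod p) U - e/2 < measure (bern_prod p) (B N)"
        by (auto simp: eventually_sequentially)
      define d where "d = e / (2 * (real N + 1))"
      have d: "d > 0" unfolding d_def using e by simp
      define Q where "Q n J C = (finite J \<and> C \<in> sets (bern_prod p) \<and> sdep J C \<and>
          measure (bern_prod p) ((A n - C) \<union> (C - A n)) < d)" for n J C
      have "\<forall>n. \<exists>J C. Q n J C"
        using union.IH d unfolding approx_set_def Q_def by blast
      then have "\<exists>Jf. \<forall>n. \<exists>C. Q n (Jf n) C" by (rule choice)
      then obtain Jf where "\<forall>n. \<exists>C. Q n (Jf n) C" by blast
      then have "\<exists>Cf. \<forall>n. Q n (Jf n) (Cf n)" by (rule choice)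
      then obtain Cf where Qf: "\<forall>n. Q n (Jf n) (Cf n)" by blast
      have JC: "\<And>n. finite (Jf n)" "\<And>n. Cf n \<in> sets (bern_prod p)" "\<And>n. sdep (Jf n) (Cf n)"
          "\<And>n. measure (bern_prod p) ((A n - Cf n) \<union> (Cf n - A n)) < d"
        using Qf unfolding Q_def by auto
      define J where "J = (\<Union>n<N. Jf n)"
      define C where "C = (\<Union>n<N. Cf n)"
      have Jfin: "finite J" unfolding J_def using JC(1) by auto
      have Cs: "C \<in> sets (bern_prod p)" unfolding C_def using JC(2) by auto
      have sdn: "sdep J (Cf n)" if "n < N" for n
        using that by (intro sdep_mono[OF _ JC(3)]) (auto simp: J_def)
      have sd: "sdep J C"
        unfolding sdep_def C_def by (auto simp: sdn[unfolded sdep_def])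
      let ?D = "\<lambda>n. (A n - Cf n) \<union> (Cf n - A n)"
      have Ds: "?D n \<in> sets (bern_prod p)" for n using As JC(2) by auto
      have sub: "(U - C) \<union> (C - U) \<subseteq> (U - B N) \<union> (\<Union>n<N. ?D n)"
        unfolding U_def B_def C_def by auto
      have "measure (bern_prod p) ((U - C) \<union> (C - U)) \<le> measure (bern_prod p) ((U - B N) \<union> (\<Union>n<N. ?D n))"
        using sub Us Bs Ds by (intro P.finite_measure_mono) auto
      also have "\<dots> \<le> measure (bern_prod p) (U - B N) + measure (bern_prod p) (\<Union>n<N. ?D n)"
        using Us Bs Ds by (intro measure_Un_le) auto
      also have "measure (bern_prod p) (U - B N) = measure (bern_prod p) U - measure (bern_prod p) (B N)"
        using Us Bs by (intro P.finite_measure_Diff) (auto simp: U_def B_def)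
      also have "measure (bern_prod p) (\<Union>n<N. ?D n) \<le> (\<Sum>n<N. measure (bern_prod p) (?D n))"
        using Ds by (intro P.finite_measure_subadditive_finite) auto
      also have "(\<Sum>n<N. measure (bern_prod p) (?D n)) \<le> real N * d"
        using sum_bounded_above[of "{..<N}" "\<lambda>n. measure (bern_prod p) (?D n)" d] JC(4)
        by (simp add: less_imp_le)
      also have "real N * d \<le> e / 2"
        unfolding d_def using e by (simp add: field_simps)
      finally have "measure (bern_prod p) ((U - C) \<union> (C - U)) < e" using N by linarith
      then show "\<exists>J C. finite J \<and> C \<in> sets (bern_prod p) \<and> sdep J C \<and>
          measure (bern_prod p) (((\<Union>n. A n) - C) \<union> (C - (\<Union>n. A n))) < e"
        using Jfin Cs sd unfolding U_def by blast
    qed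
  qed
qed

lemma meas_mg1: "(\<lambda>y. mg J x y) \<in> measurable (bern_prod p) (bern_prod p)"
  unfolding bern_prod_def mg_def
  by (rule measurable_PiM_single') (auto)

definition avg :: "('i \<Rightarrow> real) \<Rightarrow> 'i set \<Rightarrow> ('i \<Rightarrow> bool) set \<Rightarrow> ('i \<Rightarrow> bool) \<Rightarrow> real" where
  "avg p J A x = (\<integral>y. indicator A (mg J x y) \<partial>bern_prod p)"

definition downc :: "('i \<Rightarrow> bool) set \<Rightarrow> bool" where
  "downc A = (\<forall>x y. y \<le> x \<longrightarrow> x \<in> A \<longrightarrow> y \<in> A)"

lemma mg_mg2: "mg J (mg J x z) y = mg J x y"
  by (rule ext) (simp add: mg_def)

lemma int_ind_mg: "A \<in> sets (bern_prod p) \<Longrightarrow> integrable (bern_prod p) (\<lambda>y. indicator A (mg J x y) :: real)"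
  by (rule integrable_bp[where B=1]) (auto intro: measurable_compose[OF meas_mg1] simp: indicator_def)

lemma approx_fun:
  assumes A: "A \<in> sets (bern_prod p)" and dA: "downc A"
    and C: "C \<in> sets (bern_prod p)" and sC: "sdep J C"
  shows "goodf p (avg p J A)" "fdep J (avg p J A)"
    "(\<integral>x. \<bar>avg p J A x - indicator A x\<bar> \<partial>bern_prod p) \<le> 2 * measure (bern_prod p) ((A - C) \<union> (C - A))"
proof -
  interpret P: prob_space "bern_prod p" by (rule prob_bp)
  let ?f = "avg p J A"
  let ?D = "(A - C) \<union> (C - A)"
  have Ds: "?D \<in> sets (bern_prod p)" using A C by auto
  have mf: "?f \<in> borel_measurable (bern_prod p)"
  proof -
    have "(\<lambda>z. indicator A (mg J (fst z) (snd z)) :: real) \<in> borel_measurable (bern_prod p \<Otimes>\<^sub>M bern_prod p)"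
      by (rule measurable_compose[OF meas_mg borel_measurable_indicator[OF A]])
    then have "(\<lambda>(x,y). indicator A (mg J x y) :: real) \<in> borel_measurable (bern_prod p \<Otimes>\<^sub>M bern_prod p)"
      by (simp add: split_beta')
    then show ?thesis unfolding avg_def
      by (rule sigma_finite_measure.borel_measurable_lebesgue_integral[OF P.sigma_finite_measure_axioms])
  qed
  have b0: "0 \<le> ?f x" for x unfolding avg_def by (rule integral_nonneg_AE) auto
  have b1: "?f x \<le> 1" for x
  proof -
    have "?f x \<le> (\<integral>y. 1 \<partial>bern_prod p)" unfolding avg_def
      using int_ind_mg[OF A, of J x] by (intro integral_mono) (auto simp: indicator_def)
    then show ?thesis using P.prob_space by simp
  qed
  have am: "antimono ?f"
  proof (rule antimonoI)
    fix x x' :: "'a \<Rightarrow> bool" assume "x \<le> x'"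
    then have "mg J x y \<le> mg J x' y" for y by (auto simp: mg_def le_fun_def)
    then have "indicator A (mg J x' y) \<le> (indicator A (mg J x y) :: real)" for y
      using dA unfolding downc_def by (auto simp: indicator_def)
    then show "?f x' \<le> ?f x" unfolding avg_def
      by (intro integral_mono int_ind_mg A)
  qed
  show "goodf p ?f" unfolding goodf_def using mf b0 b1 am by auto
  show "fdep J ?f" unfolding fdep_def avg_def by (simp add: mg_mg2)
  have pw: "\<bar>?f x - indicator C x\<bar> \<le> (\<integral>y. indicator ?D (mg J x y) \<partial>bern_prod p)" for x
  proof -
    have ic: "indicator C (mg J x y) = (indicator C x :: real)" for y
      using sC unfolding sdep_def by (simp add: indicator_def)
    have "?f x - indicator C x = (\<integral>y. indicator A (mg J x y) - indicator C (mg J x y) \<partial>bern_prod p)"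
    proof -
      have ic2: "integrable (bern_prod p) (\<lambda>y. indicator C x :: real)"
        by (rule integrable_bp[where B=1]) (auto simp: indicator_def)
      show ?thesis unfolding avg_def ic
        using P.prob_space by (simp add: Bochner_Integration.integral_diff[OF int_ind_mg[OF A] ic2])
    qed
    also have "\<bar>\<dots>\<bar> \<le> (\<integral>y. \<bar>indicator A (mg J x y) - indicator C (mg J x y)\<bar> \<partial>bern_prod p)"
      by (rule integral_abs_bound)
    also have "\<dots> = (\<integral>y. indicator ?D (mg J x y) \<partial>bern_prod p)"
      by (rule Bochner_Integration.integral_cong) (auto simp: indicator_def)
    finally show ?thesis .
  qed
  have iD: "integrable (bern_prod p) (\<lambda>x. (\<integral>y. indicator ?D (mg J x y) \<partial>bern_prod p) :: real)"
  proof (rule integrable_bp[where B=1])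
    have "(\<lambda>z. indicator ?D (mg J (fst z) (snd z)) :: real) \<in> borel_measurable (bern_prod p \<Otimes>\<^sub>M bern_prod p)"
      by (rule measurable_compose[OF meas_mg borel_measurable_indicator[OF Ds]])
    then have "(\<lambda>(x,y). indicator ?D (mg J x y) :: real) \<in> borel_measurable (bern_prod p \<Otimes>\<^sub>M bern_prod p)"
      by (simp add: split_beta')
    then show "(\<lambda>x. (\<integral>y. indicator ?D (mg J x y) \<partial>bern_prod p) :: real) \<in> borel_measurable (bern_prod p)"
      by (rule sigma_finite_measure.borel_measurable_lebesgue_integral[OF P.sigma_finite_measure_axioms])
    fix x
    have "0 \<le> (\<integral>y. indicator ?D (mg J x y) \<partial>bern_prod p :: real)" by (rule integral_nonneg_AE) auto
    moreover have "(\<integral>y. indicator ?D (mg J x y) \<partial>bern_prod p) \<le> (\<integral>y. 1 \<partial>bern_prod p :: real)"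
      using int_ind_mg[OF Ds, of J x] by (intro integral_mono) (auto simp: indicator_def)
    ultimately show "\<bar>\<integral>y. indicator ?D (mg J x y) \<partial>bern_prod p :: real\<bar> \<le> 1" using P.prob_space by simp
  qed
  have mC: "indicator C \<in> borel_measurable (bern_prod p)" "indicator A \<in> borel_measurable (bern_prod p)"
    using borel_measurable_indicator[OF A] borel_measurable_indicator[OF C] by auto
  have i1: "integrable (bern_prod p) (\<lambda>x. \<bar>?f x - indicator C x\<bar>)"
    apply (rule integrable_bp[where B=1])
     apply (intro borel_measurable_abs borel_measurable_diff mf mC)
    using b0 b1 by (auto simp: indicator_def)
  have i2: "integrable (bern_prod p) (\<lambda>x. \<bar>indicator C x - indicator A x\<bar> :: real)"
    apply (rule integrable_bp[where B=1])
     apply (intro borel_measurable_abs borel_measurable_diff mf mC)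
    by (auto simp: indicator_def)
  have i3: "integrable (bern_prod p) (\<lambda>x. \<bar>?f x - indicator A x\<bar>)"
    apply (rule integrable_bp[where B=1])
     apply (intro borel_measurable_abs borel_measurable_diff mf mC)
    using b0 b1 by (auto simp: indicator_def)
  have "(\<integral>x. \<bar>?f x - indicator A x\<bar> \<partial>bern_prod p)
      \<le> (\<integral>x. \<bar>?f x - indicator C x\<bar> + \<bar>indicator C x - indicator A x\<bar> \<partial>bern_prod p)"
    by (rule integral_mono) (use i1 i2 i3 in auto)
  also have "\<dots> = (\<integral>x. \<bar>?f x - indicator C x\<bar> \<partial>bern_prod p) + (\<integral>x. \<bar>indicator C x - indicator A x\<bar> \<partial>bern_prod p)"
    by (rule Bochner_Integration.integral_add[OF i1 i2])
  also have "(\<integral>x. \<bar>?f x - indicator C x\<bar> \<partial>bern_prod p) \<le> (\<integral>x. (\<integral>y. indicator ?D (mg J x y) \<partial>bern_prod p) \<partial>bern_prod p)"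
    by (rule integral_mono[OF i1 iD pw])
  also have "\<dots> = (\<integral>x. indicator ?D x \<partial>bern_prod p)"
    by (rule int_mg[OF borel_measurable_indicator[OF Ds], where B=1]) (auto simp: indicator_def)
  also have "\<dots> = measure (bern_prod p) ?D" by simp
  also have "(\<integral>x. \<bar>indicator C x - indicator A x\<bar> \<partial>bern_prod p) = (\<integral>x. indicator ?D x \<partial>bern_prod p :: real)"
    by (rule Bochner_Integration.integral_cong) (auto simp: indicator_def)
  also have "\<dots> = measure (bern_prod p) ?D" by simp
  finally show "(\<integral>x. \<bar>?f x - indicator A x\<bar> \<partial>bern_prod p) \<le> 2 * measure (bern_prod p) ?D" by simp
qed


lemma prod_approx:
  fixes a b a' b' d :: real
  assumes "0 \<le> a" "a \<le> 1" "0 \<le> b'" "b' \<le> 1" "\<bar>a' - a\<bar> \<le> d" "\<bar>b' - b\<bar> \<le> d"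
  shows "a * b - 2 * d \<le> a' * b'"
proof -
  have 1: "a * (b - b') \<le> d"
  proof -
    have "a * (b - b') \<le> a * \<bar>b' - b\<bar>" using assms by (intro mult_left_mono) auto
    also have "\<dots> \<le> 1 * d" using assms by (intro mult_mono) auto
    finally show ?thesis by simp
  qed
  have 2: "b' * (a - a') \<le> d"
  proof -
    have "b' * (a - a') \<le> b' * \<bar>a' - a\<bar>" using assms by (intro mult_left_mono) auto
    also have "\<dots> \<le> 1 * d" using assms by (intro mult_mono) auto
    finally show ?thesis by simp
  qed
  have "a * b - a' * b' = a * (b - b') + b' * (a - a')" by (simp add: algebra_simps)
  then show ?thesis using 1 2 by linarith
qed

lemma harris_sets:
  assumes p: "\<forall>i. 0 \<le> p i \<and> p i \<le> 1"
    and A: "A \<in> sets (bern_prod p)" and B: "B \<in> sets (bern_prod p)"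
    and dA: "downc A" and dB: "downc B"
  shows "measure (bern_prod p) A * measure (bern_prod p) B \<le> measure (bern_prod p) (A \<inter> B)"
proof (rule field_le_epsilon)
  interpret P: prob_space "bern_prod p" by (rule prob_bp)
  fix e :: real assume e: "0 < e"
  obtain J1 C1 where JC1: "finite J1" "C1 \<in> sets (bern_prod p)" "sdep J1 C1"
      "measure (bern_prod p) ((A - C1) \<union> (C1 - A)) < e/8"
  proof -
    have "e/8 > 0" using e by simp
    then show ?thesis using that approx_all[OF A] unfolding approx_set_def by blast
  qed
  obtain J2 C2 where JC2: "finite J2" "C2 \<in> sets (bern_prod p)" "sdep J2 C2"
      "measure (bern_prod p) ((B - C2) \<union> (C2 - B)) < e/8"
  proof -
    have "e/8 > 0" using e by simp
    then show ?thesis using that approx_all[OF B] unfolding approx_set_def by blast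
  qed
  define J where "J = J1 \<union> J2"
  have Jf: "finite J" using JC1 JC2 unfolding J_def by auto
  have s1: "sdep J C1" by (rule sdep_mono[OF _ JC1(3)]) (auto simp: J_def)
  have s2: "sdep J C2" by (rule sdep_mono[OF _ JC2(3)]) (auto simp: J_def)
  define f where "f = avg p J A"
  define g where "g = avg p J B"
  note fA = approx_fun[OF A dA JC1(2) s1, folded f_def]
  note gB = approx_fun[OF B dB JC2(2) s2, folded g_def]
  have H: "(\<integral>x. f x \<partial>bern_prod p) * (\<integral>x. g x \<partial>bern_prod p) \<le> (\<integral>x. f x * g x \<partial>bern_prod p)"
    by (rule harris_fin[OF Jf p, rule_format]) (simp add: fA(1,2) gB(1,2))
  define eA where "eA = (\<integral>x. \<bar>f x - indicator A x\<bar> \<partial>bern_prod p)"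
  define eB where "eB = (\<integral>x. \<bar>g x - indicator B x\<bar> \<partial>bern_prod p)"
  have eA: "eA \<le> e/4" using fA(3) JC1(4) unfolding eA_def by linarith
  have eB: "eB \<le> e/4" using gB(3) JC2(4) unfolding eB_def by linarith
  have mA: "indicator A \<in> borel_measurable (bern_prod p)" by (rule borel_measurable_indicator[OF A])
  have mB: "indicator B \<in> borel_measurable (bern_prod p)" by (rule borel_measurable_indicator[OF B])
  have iA: "integrable (bern_prod p) (indicator A :: _ \<Rightarrow> real)"
    by (rule integrable_bp[OF mA, where B=1]) (auto simp: indicator_def)
  have iB: "integrable (bern_prod p) (indicator B :: _ \<Rightarrow> real)"
    by (rule integrable_bp[OF mB, where B=1]) (auto simp: indicator_def)
  have iAB: "integrable (bern_prod p) (\<lambda>x. indicator A x * indicator B x :: real)"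
    apply (rule integrable_bp[where B=1])
     apply (intro borel_measurable_times mA mB)
    by (auto simp: indicator_def)
  have mf: "f \<in> borel_measurable (bern_prod p)" "\<And>x. 0 \<le> f x" "\<And>x. f x \<le> 1"
    using fA(1) unfolding goodf_def by auto
  have mg': "g \<in> borel_measurable (bern_prod p)" "\<And>x. 0 \<le> g x" "\<And>x. g x \<le> 1"
    using gB(1) unfolding goodf_def by auto
  have if': "integrable (bern_prod p) f" by (rule goodf_int[OF fA(1)])
  have ig: "integrable (bern_prod p) g" by (rule goodf_int[OF gB(1)])
  have ifg: "integrable (bern_prod p) (\<lambda>x. f x * g x)" by (rule goodf_int_mult[OF fA(1) gB(1)])
  have ieA: "integrable (bern_prod p) (\<lambda>x. \<bar>f x - indicator A x\<bar>)"
    apply (rule integrable_bp[where B=1])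
     apply (intro borel_measurable_abs borel_measurable_diff mf mA)
    using mf by (auto simp: indicator_def)
  have ieB: "integrable (bern_prod p) (\<lambda>x. \<bar>g x - indicator B x\<bar>)"
    apply (rule integrable_bp[where B=1])
     apply (intro borel_measurable_abs borel_measurable_diff mg' mB)
    using mg' by (auto simp: indicator_def)
  have dfa: "\<bar>(\<integral>x. f x \<partial>bern_prod p) - measure (bern_prod p) A\<bar> \<le> eA"
  proof -
    have "(\<integral>x. f x \<partial>bern_prod p) - measure (bern_prod p) A = (\<integral>x. f x - indicator A x \<partial>bern_prod p)"
      using Bochner_Integration.integral_diff[OF if' iA] by simp
    moreover have "\<bar>(\<integral>x. f x - indicator A x \<partial>bern_prod p)\<bar> \<le> eA"
      unfolding eA_def by (rule integral_abs_bound)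
    ultimately show ?thesis by simp
  qed
  have dgb: "\<bar>(\<integral>x. g x \<partial>bern_prod p) - measure (bern_prod p) B\<bar> \<le> eB"
  proof -
    have "(\<integral>x. g x \<partial>bern_prod p) - measure (bern_prod p) B = (\<integral>x. g x - indicator B x \<partial>bern_prod p)"
      using Bochner_Integration.integral_diff[OF ig iB] by simp
    moreover have "\<bar>(\<integral>x. g x - indicator B x \<partial>bern_prod p)\<bar> \<le> eB"
      unfolding eB_def by (rule integral_abs_bound)
    ultimately show ?thesis by simp
  qed
  have dfg: "(\<integral>x. f x * g x \<partial>bern_prod p) - measure (bern_prod p) (A \<inter> B) \<le> eA + eB"
  proof -
    have m: "measure (bern_prod p) (A \<inter> B) = (\<integral>x. indicator A x * indicator B x \<partial>bern_prod p)"
      by (simp add: indicator_inter_arith[symmetric])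
    have "(\<integral>x. f x * g x \<partial>bern_prod p) - measure (bern_prod p) (A \<inter> B)
        = (\<integral>x. f x * g x - indicator A x * indicator B x \<partial>bern_prod p)"
      unfolding m using Bochner_Integration.integral_diff[OF ifg iAB] by simp
    also have "\<dots> \<le> (\<integral>x. \<bar>f x - indicator A x\<bar> + \<bar>g x - indicator B x\<bar> \<partial>bern_prod p)"
    proof (rule integral_mono)
      show "integrable (bern_prod p) (\<lambda>x. f x * g x - indicator A x * indicator B x)"
        using ifg iAB by auto
      show "integrable (bern_prod p) (\<lambda>x. \<bar>f x - indicator A x\<bar> + \<bar>g x - indicator B x\<bar>)"
        using ieA ieB by auto
      fix x
      have "f x * g x - indicator A x * indicator B x = (f x - indicator A x) * g x + indicator A x * (g x - indicator B x)"
        by (simp add: algebra_simps)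
      also have "\<dots> \<le> \<bar>f x - indicator A x\<bar> + \<bar>g x - indicator B x\<bar>"
      proof -
        have "(f x - indicator A x) * g x \<le> \<bar>f x - indicator A x\<bar> * 1"
        proof -
          have "(f x - indicator A x) * g x \<le> \<bar>f x - indicator A x\<bar> * g x"
            using mg'(2)[of x] by (intro mult_right_mono) auto
          also have "\<dots> \<le> \<bar>f x - indicator A x\<bar> * 1"
            using mg'(3)[of x] by (intro mult_left_mono) auto
          finally show ?thesis .
        qed
        moreover have "indicator A x * (g x - indicator B x) \<le> 1 * \<bar>g x - indicator B x\<bar>"
          by (auto simp: indicator_def)
        ultimately show ?thesis by simp
      qed
      finally show "f x * g x - indicator A x * indicator B x \<le> \<bar>f x - indicator A x\<bar> + \<bar>g x - indicator B x\<bar>" .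
    qed
    also have "\<dots> = eA + eB" unfolding eA_def eB_def
      by (rule Bochner_Integration.integral_add[OF ieA ieB])
    finally show ?thesis .
  qed
  have "measure (bern_prod p) A * measure (bern_prod p) B - 2 * (e/4) \<le> (\<integral>x. f x \<partial>bern_prod p) * (\<integral>x. g x \<partial>bern_prod p)"
  proof (rule prod_approx)
    show "0 \<le> measure (bern_prod p) A" by simp
    show "measure (bern_prod p) A \<le> 1" by (rule P.prob_le_1)
    show "0 \<le> (\<integral>x. g x \<partial>bern_prod p)" using mg' by (intro integral_nonneg_AE) auto
    show "(\<integral>x. g x \<partial>bern_prod p) \<le> 1"
    proof -
      have "(\<integral>x. g x \<partial>bern_prod p) \<le> (\<integral>x. 1 \<partial>bern_prod p)"
        using ig mg' by (intro integral_mono) auto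
      then show ?thesis using P.prob_space by simp
    qed
    show "\<bar>(\<integral>x. f x \<partial>bern_prod p) - measure (bern_prod p) A\<bar> \<le> e/4" using dfa eA by linarith
    show "\<bar>(\<integral>x. g x \<partial>bern_prod p) - measure (bern_prod p) B\<bar> \<le> e/4" using dgb eB by linarith
  qed
  then show "measure (bern_prod p) A * measure (bern_prod p) B \<le> measure (bern_prod p) (A \<inter> B) + e"
    using H dfg eA eB by linarith
qed

theorem lemma5:
  fixes L :: nat and \<theta> :: real and Pb :: real
    and p :: "'i::countable \<Rightarrow> real"
    and S :: "nat \<Rightarrow> ('i \<Rightarrow> bool) \<Rightarrow> ereal"
  assumes "L \<ge> 1" and "\<theta> > 0"
    and "\<forall>i. 0 \<le> p i \<and> p i \<le> 1"
    and "\<forall>t\<le>L. \<forall>\<omega>. S t \<omega> > 0"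
    and "\<forall>t\<le>L. antimono (S t)"
    and "\<forall>t\<le>L. S t \<in> borel_measurable (bern_prod p)"
    and "\<forall>t\<le>L. measure (bern_prod p) {\<omega> \<in> space (bern_prod p). S t \<omega> > ereal \<theta>} = 1 - Pb"
    and "0 \<le> Pb" and "Pb < 1"
  shows "P_out Pb (bern_prod p) S \<theta> L \<le> 1 - (1 - Pb) ^ (L + 1)"
proof -
  interpret P: prob_space "bern_prod p" by (rule prob_bp)
  note p = assms(3)
  define At where "At t = {\<omega>. ereal \<theta> < S t \<omega>}" for t
  have Ats: "At t \<in> sets (bern_prod p)" if "t \<le> L" for t
  proof -
    have "S t -` {ereal \<theta><..} \<inter> space (bern_prod p) \<in> sets (bern_prod p)"
      using assms(6) that by (intro measurable_sets[of "S t"]) auto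
    moreover have "S t -` {ereal \<theta><..} \<inter> space (bern_prod p) = At t" by (auto simp: At_def)
    ultimately show ?thesis by simp
  qed
  have dAt: "downc (At t)" if "t \<le> L" for t
    unfolding downc_def At_def
  proof (intro allI impI)
    fix x y :: "'i \<Rightarrow> bool" assume "y \<le> x" "x \<in> {\<omega>. ereal \<theta> < S t \<omega>}"
    moreover have "S t x \<le> S t y" using assms(5) that \<open>y \<le> x\<close> by (auto dest: antimonoD)
    ultimately show "y \<in> {\<omega>. ereal \<theta> < S t \<omega>}" by auto
  qed
  have mAt: "measure (bern_prod p) (At t) = 1 - Pb" if "t \<le> L" for t
    using assms(7) that by (simp add: At_def)
  define I where "I n = {\<omega>. \<forall>t\<le>n. ereal \<theta> < S t \<omega>}" for n
  have main: "n \<le> L \<longrightarrow> I n \<in> sets (bern_prod p) \<and> downc (I n) \<and> (1 - Pb) ^ Suc n \<le> measure (bern_prod p) (I n)" for n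
  proof (induction n)
    case 0
    have "I 0 = At 0" by (auto simp: I_def At_def)
    then show ?case using Ats[of 0] dAt[of 0] mAt[of 0] by simp
  next
    case (Suc n)
    show ?case
    proof
      assume n: "Suc n \<le> L"
      then have IH: "I n \<in> sets (bern_prod p)" "downc (I n)" "(1 - Pb) ^ Suc n \<le> measure (bern_prod p) (I n)"
        using Suc.IH by auto
      have eq: "I (Suc n) = I n \<inter> At (Suc n)" by (auto simp: I_def At_def le_Suc_eq)
      have s: "I (Suc n) \<in> sets (bern_prod p)" using IH(1) Ats[OF n] eq by auto
      have d: "downc (I (Suc n))" using IH(2) dAt[OF n] eq unfolding downc_def by blast
      have "(1 - Pb) ^ Suc (Suc n) = (1 - Pb) ^ Suc n * (1 - Pb)" by simp
      also have "\<dots> \<le> measure (bern_prod p) (I n) * measure (bern_prod p) (At (Suc n))"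
        using IH(3) mAt[OF n] assms(9) by (simp add: mult_right_mono)
      also have "\<dots> \<le> measure (bern_prod p) (I (Suc n))"
        unfolding eq by (rule harris_sets[OF p IH(1) Ats[OF n] IH(2) dAt[OF n]])
      finally show "I (Suc n) \<in> sets (bern_prod p) \<and> downc (I (Suc n)) \<and> (1 - Pb) ^ Suc (Suc n) \<le> measure (bern_prod p) (I (Suc n))"
        using s d by simp
    qed
  qed
  have mI: "(1 - Pb) ^ (L + 1) \<le> measure (bern_prod p) (I L)" using main[of L] by simp
  have m0: "measure (bern_prod p) {\<omega> \<in> space (bern_prod p). S 0 \<omega> > ereal \<theta>} = 1 - Pb"
    using assms(7) by simp
  have eqI: "{\<omega> \<in> space (bern_prod p). \<forall>t\<le>L. S t \<omega> > ereal \<theta>} = I L" by (simp add: I_def)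
  have "P_out Pb (bern_prod p) S \<theta> L = 1 - measure (bern_prod p) (I L)"
    unfolding P_out_def P_fail_def m0 eqI using assms(9) by (simp add: field_simps)
  then show ?thesis using mI by simp
qed

end
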